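(* Let $q$ be a prime power and let $\mathcal{F}=(\mathcal{F}_1,\ldots,\mathcal{F}_r)$ be a flag on $\mathbb{F}_{q^n}$. Then $\mathrm{Stab}^+(\mathcal{F})$ is the best friend of $\mathcal{F}$ and it contains every friend $\mathbb{F}_{q^m}$ of $\mathcal{F}$. Moreover, if $1\in\mathcal{F}_1$, then $\mathbb{F}_{q^m}\subseteq\mathrm{Stab}^+(\mathcal{F})\subseteq\mathcal{F}_1$ for every friend $\mathbb{F}_{q^m}$ of $\mathcal{F}$.
   Context: A flag on $\mathbb{F}_{q^n}$ is a sequence $(\mathcal{F}_1,\ldots,\mathcal{F}_r)$ of $\mathbb{F}_q$-subspaces with $\{0\}\subsetneq\mathcal{F}_1\subsetneq\cdots\subsetneq\mathcal{F}_r\subsetneq\mathbb{F}_{q^n}$. For $\gamma\in\mathbb{F}_{q^n}^*$, $\mathcal{F}\gamma=(\mathcal{F}_1\gamma,\ldots,\mathcal{F}_r\gamma)$ with $\mathcal{U}\gamma=\{u\gamma:u\in\mathcal{U}\}$; $\mathrm{Stab}(\mathcal{F})=\{\gamma\in\mathbb{F}_{q^n}^*:\mathcal{F}\gamma=\mathcal{F}\}$, and $\mathrm{Stab}^+(\mathcal{F})$ is the smallest subfield of $\mathbb{F}_{q^n}$ containing $\mathbb{F}_q$ and $\mathrm{Stab}(\mathcal{F})$. A subfield $\mathbb{F}_{q^m}$ of $\mathbb{F}_{q^n}$ is a friend of $\mathcal{F}$ if every $\mathcal{F}_i$ is a vector space over $\mathbb{F}_{q^m}$; the best friend of $\mathcal{F}$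 is its largest friend. *)

theory Defs
  imports Main "HOL-Computational_Algebra.Primes"
begin

text \<open>The ambient field F_{q^n} is the finite field UNIV of type 'a; the base
field F_q is a subfield K of it.\<close>

definition is_subfield :: "'a::field set \<Rightarrow> bool" where
  "is_subfield S \<longleftrightarrow> 0 \<in> S \<and> 1 \<in> S \<and>
     (\<forall>x\<in>S. \<forall>y\<in>S. x + y \<in> S \<and> x * y \<in> S) \<and>
     (\<forall>x\<in>S. - x \<in> S) \<and> (\<forall>x\<in>S. x \<noteq> 0 \<longrightarrow> inverse x \<in> S)"

definition is_subspace_over :: "'a::field set \<Rightarrow> 'a set \<Rightarrow> bool" where
  "is_subspace_over L U \<longleftrightarrow> 0 \<in> U \<and> (\<forall>x\<in>U. \<forall>y\<in>U. x + y \<in> U) \<and>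
     (\<forall>c\<in>L. \<forall>x\<in>U. c * x \<in> U)"

definition is_flag :: "'a::field set \<Rightarrow> 'a set list \<Rightarrow> bool" where
  "is_flag K Fs \<longleftrightarrow> Fs \<noteq> [] \<and>
     (\<forall>i<length Fs. is_subspace_over K (Fs ! i)) \<and>
     {0} \<subset> Fs ! 0 \<and>
     (\<forall>i. Suc i < length Fs \<longrightarrow> Fs ! i \<subset> Fs ! Suc i) \<and>
     Fs ! (length Fs - 1) \<subset> UNIV"

definition set_scale :: "'a::field set \<Rightarrow> 'a \<Rightarrow> 'a set" where
  "set_scale U \<gamma> = (\<lambda>u. u * \<gamma>) ` U"

definition Stab :: "'a::field set list \<Rightarrow> 'a set" where
  "Stab Fs = {\<gamma>. \<gamma> \<noteq> 0 \<and> map (\<lambda>U. set_scale U \<gamma>) Fs = Fs}"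

definition Stab_plus :: "'a::field set \<Rightarrow> 'a set list \<Rightarrow> 'a set" where
  "Stab_plus K Fs = \<Inter>{L. is_subfield L \<and> K \<subseteq> L \<and> Stab Fs \<subseteq> L}"

definition friend :: "'a::field set \<Rightarrow> 'a set list \<Rightarrow> 'a set \<Rightarrow> bool" where
  "friend K Fs L \<longleftrightarrow> is_subfield L \<and> K \<subseteq> L \<and>
     (\<forall>i<length Fs. is_subspace_over L (Fs ! i))"

definition best_friend :: "'a::{field,finite} set \<Rightarrow> 'a set list \<Rightarrow> 'a set \<Rightarrow> bool" where
  "best_friend K Fs L \<longleftrightarrow> friend K Fs L \<and> (\<forall>L'. friend K Fs L' \<longrightarrow> card L' \<le> card L)"

end

theory Submission
  imports Defs
begin

definition TT :: "'a::field set list \<Rightarrow> 'a set" where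
  "TT Fs = {g. \<forall>i<length Fs. \<forall>u\<in>Fs!i. g*u \<in> Fs!i}"

lemma TT_subfield:
  fixes K :: "'a::{field,finite} set"
  assumes K: "is_subfield K" and sp: "\<forall>i<length Fs. is_subspace_over K (Fs ! i)"
  shows "is_subfield (TT Fs)"
proof -
  have m1: "-1 \<in> K" using K unfolding is_subfield_def by blast
  have add: "x + y \<in> TT Fs" if "x \<in> TT Fs" "y \<in> TT Fs" for x y
  proof -
    { fix i u assume i: "i < length Fs" and u: "u \<in> Fs!i"
      have "x*u \<in> Fs!i" "y*u \<in> Fs!i" using that i u unfolding TT_def by auto
      hence "(x+y)*u \<in> Fs!i" using sp i unfolding is_subspace_over_def
        by (simp add: distrib_right) }
    thus ?thesis unfolding TT_def by auto
  qed
  have mul: "x * y \<in> TT Fs" if "x \<in> TT Fs" "y \<in> TT Fs" for x y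
    using that unfolding TT_def by (auto simp: mult.assoc)
  have neg: "- x \<in> TT Fs" if "x \<in> TT Fs" for x
  proof -
    { fix i u assume i: "i < length Fs" and u: "u \<in> Fs!i"
      have "x*u \<in> Fs!i" using that i u unfolding TT_def by auto
      hence "(-1)*(x*u) \<in> Fs!i" using sp i m1 unfolding is_subspace_over_def by blast
      hence "(-x)*u \<in> Fs!i" by simp }
    thus ?thesis unfolding TT_def by auto
  qed
  have z: "0 \<in> TT Fs" using sp unfolding TT_def is_subspace_over_def by auto
  have o: "1 \<in> TT Fs" unfolding TT_def by auto
  have inv: "inverse x \<in> TT Fs" if x: "x \<in> TT Fs" "x \<noteq> 0" for x
  proof -
    have "inj_on (\<lambda>u. x*u) (TT Fs)" using x(2) by (auto simp: inj_on_def)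
    moreover have "(\<lambda>u. x*u) ` TT Fs \<subseteq> TT Fs" using mul x by auto
    ultimately have "(\<lambda>u. x*u) ` TT Fs = TT Fs"
      by (simp add: endo_inj_surj)
    with o obtain u where "u \<in> TT Fs" "x*u = 1" by force
    moreover hence "u = inverse x" using x(2) by (metis inverse_unique)
    ultimately show ?thesis by simp
  qed
  show ?thesis unfolding is_subfield_def using add mul neg z o inv by blast
qed

lemma Stab_plus_eq:
  fixes K :: "'a::{field,finite} set"
  assumes K: "is_subfield K" and sp: "\<forall>i<length Fs. is_subspace_over K (Fs ! i)"
  shows "Stab_plus K Fs = TT Fs"
proof
  have KT: "K \<subseteq> TT Fs" using sp unfolding TT_def is_subspace_over_def by auto
  have ST: "Stab Fs \<subseteq> TT Fs"
  proof
    fix g assume "g \<in> Stab Fs"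
    hence e: "\<forall>i<length Fs. set_scale (Fs!i) g = Fs!i" unfolding Stab_def
      by (metis (mono_tags, lifting) mem_Collect_eq nth_map)
    show "g \<in> TT Fs" unfolding TT_def
    proof (intro CollectI allI impI ballI)
      fix i u assume "i < length Fs" "u \<in> Fs!i"
      hence "u*g \<in> set_scale (Fs!i) g" unfolding set_scale_def by auto
      thus "g*u \<in> Fs!i" using e \<open>i < length Fs\<close> by (simp add: mult.commute)
    qed
  qed
  show "Stab_plus K Fs \<subseteq> TT Fs" unfolding Stab_plus_def
    using TT_subfield[OF K sp] KT ST by blast
  show "TT Fs \<subseteq> Stab_plus K Fs"
  proof
    fix g assume g: "g \<in> TT Fs"
    show "g \<in> Stab_plus K Fs"
    proof (cases "g = 0")
      case True thus ?thesis unfolding Stab_plus_def is_subfield_def by auto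
    next
      case False
      have "set_scale (Fs!i) g = Fs!i" if i: "i < length Fs" for i
      proof -
        have "inj_on (\<lambda>u. u*g) (Fs!i)" using False by (auto simp: inj_on_def)
        moreover have "(\<lambda>u. u*g) ` (Fs!i) \<subseteq> Fs!i" using g i unfolding TT_def
          by (auto simp: mult.commute)
        ultimately show ?thesis unfolding set_scale_def
          by (simp add: endo_inj_surj)
      qed
      hence "map (\<lambda>U. set_scale U g) Fs = Fs" by (simp add: list_eq_iff_nth_eq)
      hence "g \<in> Stab Fs" using False unfolding Stab_def by auto
      thus ?thesis unfolding Stab_plus_def by blast
    qed
  qed
qed

theorem proposition3p16:
  fixes K :: "'a::{field,finite} set" and Fs :: "'a set list" and q n :: nat
  assumes "\<exists>p k. prime p \<and> k \<ge> 1 \<and> q = p ^ k" and "n \<ge> 1"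
    and "is_subfield K" and "card K = q" and "card (UNIV :: 'a set) = q ^ n"
    and "is_flag K Fs"
  shows "best_friend K Fs (Stab_plus K Fs)
     \<and> (\<forall>L. friend K Fs L \<longrightarrow> L \<subseteq> Stab_plus K Fs)
     \<and> (1 \<in> Fs ! 0 \<longrightarrow> (\<forall>L. friend K Fs L \<longrightarrow> L \<subseteq> Stab_plus K Fs \<and> Stab_plus K Fs \<subseteq> Fs ! 0))"
proof -
  have K: "is_subfield K" by fact
  have sp: "\<forall>i<length Fs. is_subspace_over K (Fs ! i)" and ne: "Fs \<noteq> []"
    using assms(6) unfolding is_flag_def by auto
  have eq: "Stab_plus K Fs = TT Fs" by (rule Stab_plus_eq[OF K sp])
  have KT: "K \<subseteq> TT Fs" using sp unfolding TT_def is_subspace_over_def by auto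
  have fr: "friend K Fs (TT Fs)" unfolding friend_def
    using TT_subfield[OF K sp] KT sp unfolding TT_def is_subspace_over_def by auto
  have sub: "L \<subseteq> TT Fs" if "friend K Fs L" for L
    using that unfolding friend_def TT_def is_subspace_over_def by auto
  have bf: "best_friend K Fs (TT Fs)" unfolding best_friend_def
    using fr sub by (meson card_mono finite)
  have F0: "TT Fs \<subseteq> Fs ! 0" if "1 \<in> Fs ! 0"
    using that ne unfolding TT_def by force
  show ?thesis using eq bf sub F0 by auto
qed

end
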